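(* Let $G$ be a finite connected simple graph with $n$ vertices and $m$ edges, and let $a,b\in\mathbb{C}$, $c=a-b$. Let $\mathbf d:\ell^2(R(G))\to\ell^2(V(G))$ be a linear map with $\mathbf d\mathbf d^*=\mathbf I_n$, put $\mathbf C=a\,\mathbf d^*\mathbf d+b(\mathbf I_{2m}-\mathbf d^*\mathbf d)$ and $\mathbf U=\mathbf S\mathbf C$. Then for every $u\in\mathbb{C}$ with $b^2u^2\neq 1$, \[ \det(\mathbf I_{2m}-u\mathbf U)=(1-b^2u^2)^{m-n}\det\big((1-abu^2)\mathbf I_n-cu\,\mathbf d\mathbf S\mathbf d^*\big). \] Equivalently, the zeta function $\zeta(G,u)=\det(\mathbf I_{2m}-u\mathbf U)^{-1}$ satisfies $\zeta(G,u)^{-1}=(1-b^2u^2)^{m-n}\det((1-abu^2)\mathbf I_n-cu\,\mathbf d\mathbf S\mathbf d^* )$.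
   Context: For a simple graph $G$, $R(G)=\{(u,v),(v,u): uv\in E(G)\}$ is the set of arcs (so $|R(G)|=2m$); for $e=(u,v)$, $e^{-1}=(v,u)$. $\ell^2(V(G))\cong\mathbb{C}^n$ and $\ell^2(R(G))\cong\mathbb{C}^{2m}$ are the spaces of complex functions on vertices and arcs with the standard inner product; $\mathbf d^*$ denotes the adjoint of $\mathbf d$. $\mathbf S$ is the arc-reversal operator on $\ell^2(R(G))$: $(\mathbf S\omega)(e)=\omega(e^{-1})$. $\mathbf I_k$ is the identity of size $k$. The matrix $\mathbf U=\mathbf S\mathbf C$ is the time evolution matrix of a "general coined quantum walk" on $G$. *)

theory Defs
  imports Complex_Main "Jordan_Normal_Form.Schur_Decomposition"
begin

definition simple_graph :: "'a set \<Rightarrow> ('a \<Rightarrow> 'a \<Rightarrow> bool) \<Rightarrow> bool" where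
  "simple_graph V E \<longleftrightarrow> finite V \<and> (\<forall>x y. E x y \<longrightarrow> x \<in> V \<and> y \<in> V)
     \<and> (\<forall>x y. E x y \<longrightarrow> E y x) \<and> (\<forall>x. \<not> E x x)"

definition connected_graph :: "'a set \<Rightarrow> ('a \<Rightarrow> 'a \<Rightarrow> bool) \<Rightarrow> bool" where
  "connected_graph V E \<longleftrightarrow> (\<forall>x\<in>V. \<forall>y\<in>V. E\<^sup>*\<^sup>* x y)"

definition arcs :: "('a \<Rightarrow> 'a \<Rightarrow> bool) \<Rightarrow> ('a \<times> 'a) set" where
  "arcs E = {(x, y). E x y}"

definition edges :: "('a \<Rightarrow> 'a \<Rightarrow> bool) \<Rightarrow> 'a set set" where
  "edges E = {{x, y} | x y. E x y}"

definition arc_rev :: "'a \<times> 'a \<Rightarrow> 'a \<times> 'a" where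
  "arc_rev e = (snd e, fst e)"

text \<open>The arc-reversal operator S on l^2(R(G)), as a 2m x 2m matrix with respect to the
  standard basis indexed by the enumeration as of the arcs: (S w)(e) = w(e^{-1}).\<close>
definition reversal_mat :: "('a \<times> 'a) list \<Rightarrow> complex mat" where
  "reversal_mat as = mat (length as) (length as)
     (\<lambda>(i, j). if as ! j = arc_rev (as ! i) then 1 else 0)"

end

theory Submission
  imports Defs
begin

declare minus_carrier_mat[simp]

lemma mult_index_sum: assumes "A \<in> carrier_mat nr n" "B \<in> carrier_mat n nc" "i < nr" "j < nc"
  shows "(A * B) $$ (i,j) = (\<Sum>k<n. A $$ (i,k) * B $$ (k,j))"
  using assms by (auto simp: index_mult_mat scalar_prod_def lessThan_atLeast0 intro!: sum.cong)

locale finv =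
  fixes N :: nat and \<sigma> :: "nat \<Rightarrow> nat"
  assumes sig_lt: "\<And>i. i < N \<Longrightarrow> \<sigma> i < N"
    and sig_inv: "\<And>i. i < N \<Longrightarrow> \<sigma> (\<sigma> i) = i"
    and sig_ne: "\<And>i. i < N \<Longrightarrow> \<sigma> i \<noteq> i"
begin

definition Sm :: "complex mat" where
  "Sm = mat N N (\<lambda>(i,j). if j = \<sigma> i then 1 else 0)"

lemma Sm_carrier[simp]: "Sm \<in> carrier_mat N N" unfolding Sm_def by simp
lemma Sm_dims[simp]: "dim_row Sm = N" "dim_col Sm = N" unfolding Sm_def by simp_all

lemma Sm_index: "i < N \<Longrightarrow> j < N \<Longrightarrow> Sm $$ (i,j) = (if j = \<sigma> i then 1 else 0)"
  unfolding Sm_def by simp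

lemma Sm_sq: "Sm * Sm = 1\<^sub>m N"
proof (rule eq_matI)
  fix i j assume i: "i < dim_row (1\<^sub>m N)" and j: "j < dim_col (1\<^sub>m N)"
  hence i: "i < N" and j: "j < N" by auto
  have "(Sm * Sm) $$ (i,j) = (\<Sum>k<N. Sm $$ (i,k) * Sm $$ (k,j))"
    by (rule mult_index_sum[OF Sm_carrier Sm_carrier i j])
  also have "\<dots> = (\<Sum>k<N. if k = \<sigma> i then (if j = \<sigma> k then 1 else 0) else 0)"
    by (rule sum.cong, auto simp: Sm_index i j)
  also have "\<dots> = (if j = i then 1 else 0)"
    using sig_lt[OF i] sig_inv[OF i] by (simp add: sum.delta)
  finally show "(Sm * Sm) $$ (i,j) = 1\<^sub>m N $$ (i,j)" using i j by simp
qed (auto simp: Sm_def)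

definition Dm :: "complex mat" where
  "Dm = mat N N (\<lambda>(i,j). if i = j then (if i < \<sigma> i then 1 else -1) else 0)"

lemma Dm_carrier[simp]: "Dm \<in> carrier_mat N N" unfolding Dm_def by simp
lemma Dm_dims[simp]: "dim_row Dm = N" "dim_col Dm = N" unfolding Dm_def by simp_all

definition dg :: "nat \<Rightarrow> complex" where "dg i = (if i < \<sigma> i then 1 else -1)"

lemma Dm_left: assumes "M \<in> carrier_mat N N"
  shows "Dm * M = mat N N (\<lambda>(i,j). dg i * M $$ (i,j))"
proof (rule eq_matI)
  fix i j assume "i < dim_row (mat N N (\<lambda>(i,j). dg i * M $$ (i,j)))" "j < dim_col (mat N N (\<lambda>(i,j). dg i * M $$ (i,j)))"
  hence i: "i < N" and j: "j < N" by auto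
  have "(Dm * M) $$ (i,j) = (\<Sum>k<N. Dm $$ (i,k) * M $$ (k,j))"
    using i j by (simp add: mult_index_sum[OF Dm_carrier assms])
  also have "\<dots> = (\<Sum>k<N. if k = i then dg i * M $$ (k,j) else 0)"
    by (rule sum.cong, auto simp: Dm_def dg_def i)
  also have "\<dots> = dg i * M $$ (i,j)" using i by (simp add: sum.delta)
  finally show "(Dm * M) $$ (i,j) = mat N N (\<lambda>(i,j). dg i * M $$ (i,j)) $$ (i,j)" using i j by simp
qed (use assms in auto)

lemma Dm_right: assumes "M \<in> carrier_mat N N"
  shows "M * Dm = mat N N (\<lambda>(i,j). M $$ (i,j) * dg j)"
proof (rule eq_matI)
  fix i j assume "i < dim_row (mat N N (\<lambda>(i,j). M $$ (i,j) * dg j))" "j < dim_col (mat N N (\<lambda>(i,j). M $$ (i,j) * dg j))"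
  hence i: "i < N" and j: "j < N" by auto
  have "(M * Dm) $$ (i,j) = (\<Sum>k<N. M $$ (i,k) * Dm $$ (k,j))"
    using i j by (simp add: mult_index_sum[OF assms Dm_carrier])
  also have "\<dots> = (\<Sum>k<N. if k = j then M $$ (i,k) * dg j else 0)"
    by (rule sum.cong, auto simp: Dm_def dg_def j)
  also have "\<dots> = M $$ (i,j) * dg j" using j by (simp add: sum.delta)
  finally show "(M * Dm) $$ (i,j) = mat N N (\<lambda>(i,j). M $$ (i,j) * dg j) $$ (i,j)" using i j by simp
qed (use assms in auto)

lemma Dm_sq: "Dm * Dm = 1\<^sub>m N"
  by (subst Dm_left, simp, rule eq_matI, auto simp: Dm_def dg_def)

lemma det_Dm: "det Dm * det Dm = 1"
  using det_mult[OF Dm_carrier Dm_carrier] Dm_sq by simp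

lemma conj_Dm: "Dm * (1\<^sub>m N - t \<cdot>\<^sub>m Sm) * Dm = 1\<^sub>m N + t \<cdot>\<^sub>m Sm"
proof -
  have c: "1\<^sub>m N - t \<cdot>\<^sub>m Sm \<in> carrier_mat N N" by simp
  have "Dm * (1\<^sub>m N - t \<cdot>\<^sub>m Sm) * Dm = mat N N (\<lambda>(i,j). dg i * (1\<^sub>m N - t \<cdot>\<^sub>m Sm) $$ (i,j) * dg j)"
    unfolding Dm_left[OF c] by (subst Dm_right, auto)
  also have "\<dots> = 1\<^sub>m N + t \<cdot>\<^sub>m Sm"
  proof (rule eq_matI)
    fix i j assume "i < dim_row (1\<^sub>m N + t \<cdot>\<^sub>m Sm)" "j < dim_col (1\<^sub>m N + t \<cdot>\<^sub>m Sm)"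
    hence i: "i < N" and j: "j < N" by auto
    show "mat N N (\<lambda>(i,j). dg i * (1\<^sub>m N - t \<cdot>\<^sub>m Sm) $$ (i,j) * dg j) $$ (i,j) = (1\<^sub>m N + t \<cdot>\<^sub>m Sm) $$ (i,j)"
      using i j sig_inv[OF i] sig_ne[OF i] sig_lt[OF i] by (auto simp: Sm_index dg_def)
  qed auto
  finally show ?thesis .
qed

lemma f_even: "det (1\<^sub>m N - t \<cdot>\<^sub>m Sm) = det (1\<^sub>m N - (-t) \<cdot>\<^sub>m Sm)"
proof -
  have c: "1\<^sub>m N - t \<cdot>\<^sub>m Sm \<in> carrier_mat N N" by simp
  have "det (Dm * (1\<^sub>m N - t \<cdot>\<^sub>m Sm) * Dm) = det (1\<^sub>m N - t \<cdot>\<^sub>m Sm)"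
    using det_Dm by (simp add: det_mult[OF mult_carrier_mat[OF Dm_carrier c] Dm_carrier] det_mult[OF Dm_carrier c])
  moreover have "1\<^sub>m N + t \<cdot>\<^sub>m Sm = 1\<^sub>m N - (-t) \<cdot>\<^sub>m Sm"
    by (rule eq_matI, auto)
  ultimately show ?thesis using conj_Dm by simp
qed

lemma prodI: "(1\<^sub>m N - t \<cdot>\<^sub>m Sm) * (1\<^sub>m N - (-t) \<cdot>\<^sub>m Sm) = (1 - t^2) \<cdot>\<^sub>m 1\<^sub>m N"
proof -
  have e: "1\<^sub>m N - t \<cdot>\<^sub>m Sm = 1\<^sub>m N + (-t) \<cdot>\<^sub>m Sm" by (rule eq_matI, auto)
  have e2: "1\<^sub>m N - (-t) \<cdot>\<^sub>m Sm = 1\<^sub>m N + t \<cdot>\<^sub>m Sm" by (rule eq_matI, auto)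
  have "(1\<^sub>m N + (-t) \<cdot>\<^sub>m Sm) * (1\<^sub>m N + t \<cdot>\<^sub>m Sm)
      = 1\<^sub>m N * (1\<^sub>m N + t \<cdot>\<^sub>m Sm) + ((-t) \<cdot>\<^sub>m Sm) * (1\<^sub>m N + t \<cdot>\<^sub>m Sm)"
    by (rule add_mult_distrib_mat[of _ N N], auto)
  also have "\<dots> = (1\<^sub>m N + t \<cdot>\<^sub>m Sm) + ((-t) \<cdot>\<^sub>m Sm + (-t*t) \<cdot>\<^sub>m (Sm * Sm))"
  proof -
    have "((-t) \<cdot>\<^sub>m Sm) * (1\<^sub>m N + t \<cdot>\<^sub>m Sm) = (-t) \<cdot>\<^sub>m (Sm * (1\<^sub>m N + t \<cdot>\<^sub>m Sm))"
      by (rule mult_smult_assoc_mat[of _ N N _ N], auto)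
    also have "Sm * (1\<^sub>m N + t \<cdot>\<^sub>m Sm) = Sm * 1\<^sub>m N + Sm * (t \<cdot>\<^sub>m Sm)"
      by (rule mult_add_distrib_mat[of _ N N], auto)
    also have "Sm * (t \<cdot>\<^sub>m Sm) = t \<cdot>\<^sub>m (Sm * Sm)"
      by (rule mult_smult_distrib[of _ N N], auto)
    finally have "((-t) \<cdot>\<^sub>m Sm) * (1\<^sub>m N + t \<cdot>\<^sub>m Sm) = (-t) \<cdot>\<^sub>m (Sm + t \<cdot>\<^sub>m (Sm * Sm))" by simp
    also have "\<dots> = (-t) \<cdot>\<^sub>m Sm + (-t*t) \<cdot>\<^sub>m (Sm * Sm)"
      unfolding Sm_sq by (rule eq_matI, auto simp: algebra_simps)
    finally show ?thesis by simp
  qed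
  also have "\<dots> = (1 - t^2) \<cdot>\<^sub>m 1\<^sub>m N"
    unfolding Sm_sq by (rule eq_matI, auto simp: power2_eq_square)
  finally show ?thesis using e e2 by simp
qed

lemma f_prod: "det (1\<^sub>m N - t \<cdot>\<^sub>m Sm) * det (1\<^sub>m N - (-t) \<cdot>\<^sub>m Sm) = (1 - t^2) ^ N"
proof -
  have "(1\<^sub>m N - t \<cdot>\<^sub>m Sm) * (1\<^sub>m N - (-t) \<cdot>\<^sub>m Sm) = (1 - t^2) \<cdot>\<^sub>m 1\<^sub>m N"
    by (rule prodI)
  hence "det ((1\<^sub>m N - t \<cdot>\<^sub>m Sm) * (1\<^sub>m N - (-t) \<cdot>\<^sub>m Sm)) = (1 - t^2) ^ N" by simp
  thus ?thesis by (subst (asm) det_mult[of _ N], auto)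
qed

definition Fm :: "complex poly" where
  "Fm = det (mat N N (\<lambda>(i,j). [:(if i = j then 1 else 0), - (if j = \<sigma> i then 1 else 0):]))"

lemma poly_Fm: "poly Fm t = det (1\<^sub>m N - t \<cdot>\<^sub>m Sm)"
  unfolding Fm_def
  by (rule poly_det_cong[of _ N], auto simp: Sm_index)

lemma det_Sm: assumes "N = 2 * m"
  shows "det (1\<^sub>m N - t \<cdot>\<^sub>m Sm) = (1 - t^2) ^ m"
proof -
  define G :: "complex poly" where "G = [:1,0,-1:] ^ m"
  have pG: "poly G x = (1 - x^2) ^ m" for x
    unfolding G_def by (simp add: poly_power power2_eq_square)
  have "poly (Fm^2) x = poly (G^2) x" for x
  proof -
    have "poly (Fm^2) x = det (1\<^sub>m N - x \<cdot>\<^sub>m Sm) * det (1\<^sub>m N - (-x) \<cdot>\<^sub>m Sm)"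
      by (simp add: poly_Fm power2_eq_square f_even[of x])
    also have "\<dots> = (1 - x^2) ^ N" by (rule f_prod)
    also have "\<dots> = poly (G^2) x" using assms by (simp add: pG power_mult_distrib power_mult[symmetric] mult.commute)
    finally show ?thesis .
  qed
  hence "Fm^2 = G^2" by (intro poly_eq_poly_eq_iff[THEN iffD1] ext)
  hence "Fm = G \<or> Fm = -G" by (simp add: power2_eq_iff)
  moreover have "poly Fm 0 = 1"
  proof -
    have "1\<^sub>m N - 0 \<cdot>\<^sub>m Sm = 1\<^sub>m N" by (rule eq_matI, auto)
    thus ?thesis by (simp add: poly_Fm)
  qed
  moreover have "poly G 0 = 1" by (simp add: pG)
  ultimately have "Fm = G" by auto
  thus ?thesis using poly_Fm[of t] pG[of t] by simp
qed

end

lemma sylvester_det: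
  fixes X Y :: "'a :: idom mat"
  assumes X: "X \<in> carrier_mat N n" and Y: "Y \<in> carrier_mat n N"
  shows "det (1\<^sub>m N - X * Y) = det (1\<^sub>m n - Y * X)"
proof -
  have XY: "X * Y \<in> carrier_mat N N" using X Y by simp
  have YX: "Y * X \<in> carrier_mat n n" using X Y by simp
  let ?L1 = "four_block_mat (1\<^sub>m N) X (0\<^sub>m n N) (1\<^sub>m n)"
  let ?R1 = "four_block_mat (1\<^sub>m N - X * Y) (0\<^sub>m N n) Y (1\<^sub>m n)"
  let ?L2 = "four_block_mat (1\<^sub>m N) (0\<^sub>m N n) Y (1\<^sub>m n)"
  let ?R2 = "four_block_mat (1\<^sub>m N) X (0\<^sub>m n N) (1\<^sub>m n - Y * X)"
  let ?T = "four_block_mat (1\<^sub>m N) X Y (1\<^sub>m n)"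
  have "?L1 * ?R1 = four_block_mat (1\<^sub>m N * (1\<^sub>m N - X * Y) + X * Y) (1\<^sub>m N * 0\<^sub>m N n + X * 1\<^sub>m n)
      (0\<^sub>m n N * (1\<^sub>m N - X * Y) + 1\<^sub>m n * Y) (0\<^sub>m n N * 0\<^sub>m N n + 1\<^sub>m n * 1\<^sub>m n)"
    by (rule mult_four_block_mat, insert X Y, auto)
  also have "\<dots> = ?T"
    by (rule cong_four_block_mat, insert X Y XY, auto intro!: eq_matI)
  finally have 1: "?L1 * ?R1 = ?T" .
  have "?L2 * ?R2 = four_block_mat (1\<^sub>m N * 1\<^sub>m N + 0\<^sub>m N n * 0\<^sub>m n N) (1\<^sub>m N * X + 0\<^sub>m N n * (1\<^sub>m n - Y * X))
      (Y * 1\<^sub>m N + 1\<^sub>m n * 0\<^sub>m n N) (Y * X + 1\<^sub>m n * (1\<^sub>m n - Y * X))"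
    by (rule mult_four_block_mat, insert X Y, auto)
  also have "\<dots> = ?T"
    by (rule cong_four_block_mat, insert X Y YX, auto intro!: eq_matI)
  finally have 2: "?L2 * ?R2 = ?T" .
  have dL1: "det ?L1 = 1"
    by (subst det_four_block_mat_lower_left_zero[OF _ X], insert YX, auto)
  have dR1: "det ?R1 = det (1\<^sub>m N - X * Y)"
    by (subst det_four_block_mat_upper_right_zero[of _ N _ n], insert Y XY, auto)
  have dL2: "det ?L2 = 1"
    by (subst det_four_block_mat_upper_right_zero[of _ N _ n], insert Y XY, auto)
  have dR2: "det ?R2 = det (1\<^sub>m n - Y * X)"
    by (subst det_four_block_mat_lower_left_zero[OF _ X], insert YX, auto)
  have A: "det ?T = det ?L1 * det ?R1"
    unfolding 1[symmetric] by (rule det_mult[of _ "N+n"], insert X Y, auto)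
  have B: "det ?T = det ?L2 * det ?R2"
    unfolding 2[symmetric] by (rule det_mult[of _ "N+n"], insert X Y, auto)
  have "det (1\<^sub>m N - X * Y) = det ?L1 * det ?R1" by (simp only: dL1 dR1 mult_1)
  also note A[symmetric]
  also note B
  also have "det ?L2 * det ?R2 = det (1\<^sub>m n - Y * X)" by (simp only: dL2 dR2 mult_1)
  finally show ?thesis .
qed
lemma card_arcs:
  assumes g: "simple_graph V E"
  shows "card (arcs E) = 2 * card (edges E)"
proof -
  have fin: "finite (arcs E)"
  proof -
    have "arcs E \<subseteq> V \<times> V" using g unfolding simple_graph_def arcs_def by auto
    thus ?thesis using g unfolding simple_graph_def by (meson finite_SigmaI finite_subset)
  qed
  have ed: "edges E = (\<lambda>(x,y). {x,y}) ` arcs E" unfolding edges_def arcs_def by auto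
  hence fe: "finite (edges E)" using fin by simp
  define A where "A e = {(x,y). E x y \<and> {x,y} = e}" for e
  have un: "arcs E = (\<Union>e\<in>edges E. A e)" unfolding A_def arcs_def edges_def by auto
  have c2: "card (A e) = 2" if eE: "e \<in> edges E" for e
  proof -
    obtain x y where e: "e = {x,y}" and xy: "E x y" using eE unfolding edges_def by blast
    have "x \<noteq> y" using g xy unfolding simple_graph_def by auto
    have "A e = {(x,y),(y,x)}"
      using g xy unfolding A_def e simple_graph_def by (auto simp: doubleton_eq_iff)
    thus ?thesis using \<open>x \<noteq> y\<close> by simp
  qed
  have "card (arcs E) = (\<Sum>e\<in>edges E. card (A e))"
    unfolding un
  proof (rule card_UN_disjoint[OF fe])
    show "\<forall>i\<in>edges E. finite (A i)" using c2 by (metis card.infinite zero_neq_numeral)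
    show "\<forall>i\<in>edges E. \<forall>j\<in>edges E. i \<noteq> j \<longrightarrow> A i \<inter> A j = {}" unfolding A_def by auto
  qed
  also have "\<dots> = (\<Sum>e\<in>edges E. 2)" using c2 by simp
  finally show ?thesis by simp
qed

lemma sigma_exists:
  assumes g: "simple_graph V E" and da: "distinct as" and sa: "set as = arcs E"
  shows "\<exists>\<sigma>. finv (length as) \<sigma> \<and> reversal_mat as = finv.Sm (length as) \<sigma>"
proof -
  let ?N = "length as"
  have ex: "\<exists>j. j < ?N \<and> as ! j = arc_rev (as ! i)" if i: "i < ?N" for i
  proof -
    have "as ! i \<in> arcs E" using i sa nth_mem by blast
    hence "arc_rev (as ! i) \<in> arcs E" using g unfolding arcs_def arc_rev_def simple_graph_def by auto
    hence "arc_rev (as ! i) \<in> set as" using sa by simp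
    thus ?thesis unfolding in_set_conv_nth by auto
  qed
  define \<sigma> where "\<sigma> i = (THE j. j < ?N \<and> as ! j = arc_rev (as ! i))" for i
  have sp: "\<sigma> i < ?N \<and> as ! (\<sigma> i) = arc_rev (as ! i)" if i: "i < ?N" for i
  proof -
    obtain j where j: "j < ?N" "as ! j = arc_rev (as ! i)" using ex[OF i] by blast
    have un: "j' = j" if j': "j' < ?N \<and> as ! j' = arc_rev (as ! i)" for j'
    proof -
      have "as ! j' = as ! j" using j j' by simp
      thus ?thesis using nth_eq_iff_index_eq[OF da, of j' j] j j' by simp
    qed
    have "\<sigma> i = j" unfolding \<sigma>_def
    proof (rule the_equality)
      show "j < ?N \<and> as ! j = arc_rev (as ! i)" using j by simp
    next
      fix j' assume "j' < ?N \<and> as ! j' = arc_rev (as ! i)"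
      thus "j' = j" by (rule un)
    qed
    thus ?thesis using j by blast
  qed
  have uniq: "as ! j = arc_rev (as ! i) \<longleftrightarrow> j = \<sigma> i" if i: "i < ?N" and j: "j < ?N" for i j
  proof
    assume "as ! j = arc_rev (as ! i)"
    hence "as ! j = as ! (\<sigma> i)" using sp[OF i] by simp
    moreover have "\<sigma> i < ?N" using sp[OF i] by (rule conjunct1)
    ultimately show "j = \<sigma> i" using nth_eq_iff_index_eq[OF da j] by blast
  next
    assume "j = \<sigma> i" thus "as ! j = arc_rev (as ! i)" using sp[OF i] by simp
  qed
  have fv: "finv ?N \<sigma>"
  proof
    fix i assume i: "i < ?N"
    have si: "\<sigma> i < ?N" using sp[OF i] by simp
    show "\<sigma> i < ?N" by (rule si)
    have "as ! \<sigma> (\<sigma> i) = arc_rev (as ! \<sigma> i)" using sp[OF si] by simp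
    also have "\<dots> = as ! i" using sp[OF i] by (simp add: arc_rev_def)
    finally have "as ! \<sigma> (\<sigma> i) = as ! i" .
    moreover have ssi: "\<sigma> (\<sigma> i) < ?N" using sp[OF si] by (rule conjunct1)
    ultimately show "\<sigma> (\<sigma> i) = i" using nth_eq_iff_index_eq[OF da ssi i] by blast
    show "\<sigma> i \<noteq> i"
    proof
      assume "\<sigma> i = i"
      from conjunct2[OF sp[OF i]] have eq: "as ! i = arc_rev (as ! i)" unfolding \<open>\<sigma> i = i\<close> .
      have "as ! i \<in> arcs E" using i sa nth_mem by blast
      then obtain x y where xy: "as ! i = (x, y)" "E x y" unfolding arcs_def by auto
      from eq have "(x, y) = arc_rev (x, y)" unfolding xy(1) .
      hence "fst (x, y) = fst (arc_rev (x, y))" by (rule arg_cong)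
      hence "x = y" by (simp add: arc_rev_def)
      moreover have "\<not> E y y" using g by (simp add: simple_graph_def)
      ultimately show False using xy(2) by simp
    qed
  qed
  have "reversal_mat as = finv.Sm (length as) \<sigma>"
    unfolding reversal_mat_def finv.Sm_def[OF fv]
    by (rule eq_matI, auto simp: uniq)
  thus ?thesis using fv by blast
qed

lemma adj_carrier: "d \<in> carrier_mat n N \<Longrightarrow> mat_adjoint d \<in> carrier_mat N n"
  unfolding mat_adjoint_def by auto

theorem theorem5:
  fixes V :: "'a set" and E :: "'a \<Rightarrow> 'a \<Rightarrow> bool"
    and vs :: "'a list" and as :: "('a \<times> 'a) list"
    and n m :: nat and a b c u :: complex
    and d C S U :: "complex mat"
  assumes "simple_graph V E" and "connected_graph V E"
    and "distinct vs" and "set vs = V" and "n = length vs"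
    and "distinct as" and "set as = arcs E" and "m = card (edges E)"
    and "c = a - b"
    and "d \<in> carrier_mat n (2 * m)"
    and "d * mat_adjoint d = 1\<^sub>m n"
    and "S = reversal_mat as"
    and "C = a \<cdot>\<^sub>m (mat_adjoint d * d) + b \<cdot>\<^sub>m (1\<^sub>m (2 * m) - mat_adjoint d * d)"
    and "U = S * C"
    and "b\<^sup>2 * u\<^sup>2 \<noteq> 1"
  shows "det (1\<^sub>m (2 * m) - u \<cdot>\<^sub>m U) =
    (1 - b\<^sup>2 * u\<^sup>2) powi (int m - int n) *
    det ((1 - a * b * u\<^sup>2) \<cdot>\<^sub>m 1\<^sub>m n - (c * u) \<cdot>\<^sub>m (d * S * mat_adjoint d))"
proof -
  note g = assms(1)
  have len: "length as = 2 * m"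
    using card_arcs[OF g] assms(6,7,8) distinct_card by metis
  define N where "N = 2 * m"
  obtain \<sigma> where fv: "finv N \<sigma>" and Sd: "S = finv.Sm N \<sigma>"
    using sigma_exists[OF g assms(6,7)] assms(12) len N_def by auto
  interpret finv N \<sigma> by (rule fv)
  have Sc: "S \<in> carrier_mat N N" unfolding Sd by simp
  have dc: "d \<in> carrier_mat n N" using assms(10) N_def by simp
  define dH where "dH = mat_adjoint d"
  have dHc: "dH \<in> carrier_mat N n" unfolding dH_def by (rule adj_carrier[OF dc])
  have ddH: "d * dH = 1\<^sub>m n" using assms(11) dH_def by simp
  define P where "P = dH * d"
  have Pc: "P \<in> carrier_mat N N" unfolding P_def using dHc dc by simp
  define t where "t = u * b"
  define k where "k = 1 - b\<^sup>2 * u\<^sup>2"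
  have k0: "k \<noteq> 0" using assms(15) unfolding k_def by simp
  have SS: "S * S = 1\<^sub>m N" unfolding Sd by (rule Sm_sq)
  have C_eq: "C = b \<cdot>\<^sub>m 1\<^sub>m N + c \<cdot>\<^sub>m P"
    unfolding assms(13) P_def[symmetric] dH_def[symmetric] N_def[symmetric] assms(9)
    by (rule eq_matI, insert Pc, auto simp: algebra_simps)
  have U_eq: "U = b \<cdot>\<^sub>m S + c \<cdot>\<^sub>m (S * P)"
  proof -
    have "U = S * (b \<cdot>\<^sub>m 1\<^sub>m N) + S * (c \<cdot>\<^sub>m P)"
      unfolding assms(14) C_eq by (rule mult_add_distrib_mat[OF Sc], insert Pc, auto)
    also have "S * (b \<cdot>\<^sub>m 1\<^sub>m N) = b \<cdot>\<^sub>m S"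
      using mult_smult_distrib[OF Sc, of "1\<^sub>m N" N b] Sc by simp
    also have "S * (c \<cdot>\<^sub>m P) = c \<cdot>\<^sub>m (S * P)" by (rule mult_smult_distrib[OF Sc Pc])
    finally show ?thesis .
  qed
  have SPc: "S * P \<in> carrier_mat N N" using Sc Pc by simp
  define M where "M = 1\<^sub>m N - u \<cdot>\<^sub>m U"
  have M_eq: "M = (1\<^sub>m N - t \<cdot>\<^sub>m S) - (u * c) \<cdot>\<^sub>m (S * P)"
    unfolding M_def U_eq t_def by (rule eq_matI, insert Sc SPc, auto simp: algebra_simps)
  define B where "B = 1\<^sub>m N - (-t) \<cdot>\<^sub>m S"
  have Bc: "B \<in> carrier_mat N N" unfolding B_def using Sc by simp
  have BA: "B * (1\<^sub>m N - t \<cdot>\<^sub>m S) = k \<cdot>\<^sub>m 1\<^sub>m N"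
    unfolding B_def Sd using prodI[of "-t"] by (simp add: k_def t_def power_mult_distrib mult.commute)
  define W where "W = S + t \<cdot>\<^sub>m 1\<^sub>m N"
  have Wc: "W \<in> carrier_mat N N" unfolding W_def using Sc by simp
  have BSP: "B * (S * P) = W * P"
  proof -
    have e1: "B = 1\<^sub>m N + t \<cdot>\<^sub>m S" unfolding B_def by (rule eq_matI, insert Sc, auto)
    have "B * (S * P) = 1\<^sub>m N * (S * P) + (t \<cdot>\<^sub>m S) * (S * P)"
      unfolding e1 by (rule add_mult_distrib_mat[of _ N N], insert Sc SPc, auto)
    also have "(t \<cdot>\<^sub>m S) * (S * P) = t \<cdot>\<^sub>m (S * (S * P))"
      by (rule mult_smult_assoc_mat[OF Sc SPc])
    also have "S * (S * P) = P" using assoc_mult_mat[OF Sc Sc Pc] SS Pc by simp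
    also have "1\<^sub>m N * (S * P) = S * P" by (rule left_mult_one_mat[OF SPc])
    also have "S * P + t \<cdot>\<^sub>m P = W * P"
    proof -
      have "W * P = S * P + (t \<cdot>\<^sub>m 1\<^sub>m N) * P"
        unfolding W_def by (rule add_mult_distrib_mat[OF Sc _ Pc], auto)
      also have "(t \<cdot>\<^sub>m 1\<^sub>m N) * P = t \<cdot>\<^sub>m P" using mult_smult_assoc_mat[of "1\<^sub>m N" N N P N t] Pc by simp
      finally show ?thesis by simp
    qed
    finally show ?thesis .
  qed
  have Ac: "1\<^sub>m N - t \<cdot>\<^sub>m S \<in> carrier_mat N N" using Sc by simp
  have BM: "B * M = k \<cdot>\<^sub>m 1\<^sub>m N - (u * c) \<cdot>\<^sub>m (W * P)"
  proof -
    have "B * M = B * (1\<^sub>m N - t \<cdot>\<^sub>m S) - B * ((u * c) \<cdot>\<^sub>m (S * P))"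
      unfolding M_eq by (rule mult_minus_distrib_mat[OF Bc Ac], insert SPc, auto)
    also have "B * ((u * c) \<cdot>\<^sub>m (S * P)) = (u * c) \<cdot>\<^sub>m (W * P)"
      using mult_smult_distrib[OF Bc SPc] BSP by simp
    finally show ?thesis using BA by simp
  qed
  define X where "X = (u * c / k) \<cdot>\<^sub>m (W * dH)"
  have Xc: "X \<in> carrier_mat N n" unfolding X_def using Wc dHc by simp
  have WP: "W * P = (W * dH) * d" unfolding P_def using assoc_mult_mat[OF Wc dHc dc] by simp
  have Xd: "X * d = (u * c / k) \<cdot>\<^sub>m (W * P)"
    unfolding X_def WP by (rule mult_smult_assoc_mat[of _ N n _ N], insert Wc dHc dc, auto)
  have WPc: "W * P \<in> carrier_mat N N" using Wc Pc by simp
  have BM2: "B * M = k \<cdot>\<^sub>m (1\<^sub>m N - X * d)"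
    unfolding BM Xd by (rule eq_matI, insert WPc Wc Pc k0, auto simp: field_simps)
  define DS where "DS = d * S * dH"
  have DSc: "DS \<in> carrier_mat n n" unfolding DS_def using dc Sc dHc by simp
  have dX: "d * X = (u * c / k) \<cdot>\<^sub>m (DS + t \<cdot>\<^sub>m 1\<^sub>m n)"
  proof -
    have "d * X = (u * c / k) \<cdot>\<^sub>m (d * (W * dH))"
      unfolding X_def by (rule mult_smult_distrib[OF dc], insert Wc dHc, auto)
    also have "d * (W * dH) = (d * W) * dH" using assoc_mult_mat[OF dc Wc dHc] by simp
    also have "d * W = d * S + d * (t \<cdot>\<^sub>m 1\<^sub>m N)"
      unfolding W_def by (rule mult_add_distrib_mat[OF dc Sc], auto)
    also have "d * (t \<cdot>\<^sub>m 1\<^sub>m N) = t \<cdot>\<^sub>m d"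
      using mult_smult_distrib[OF dc, of "1\<^sub>m N" N t] dc by simp
    also have "(d * S + t \<cdot>\<^sub>m d) * dH = (d * S) * dH + (t \<cdot>\<^sub>m d) * dH"
      by (rule add_mult_distrib_mat[of _ n N], insert dc Sc dHc, auto)
    also have "(t \<cdot>\<^sub>m d) * dH = t \<cdot>\<^sub>m 1\<^sub>m n"
      using mult_smult_assoc_mat[OF dc dHc, of t] ddH by simp
    finally show ?thesis unfolding DS_def .
  qed
  define T where "T = (1 - a * b * u\<^sup>2) \<cdot>\<^sub>m 1\<^sub>m n - (c * u) \<cdot>\<^sub>m DS"
  have Tc: "T \<in> carrier_mat n n" unfolding T_def using DSc by simp
  have last: "1\<^sub>m n - d * X = (1 / k) \<cdot>\<^sub>m T"
    unfolding dX T_def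
    by (rule eq_matI, insert DSc k0, auto simp: field_simps k_def t_def assms(9) power2_eq_square)
  have detB: "det B = k ^ m"
    unfolding B_def Sd using det_Sm[OF N_def, of "-t"] by (simp add: k_def t_def power_mult_distrib mult.commute)
  have Mc: "M \<in> carrier_mat N N" unfolding M_eq using Sc SPc by simp
  have "det B * det M = det (B * M)" using det_mult[OF Bc Mc] by simp
  also have "\<dots> = k ^ N * det (1\<^sub>m N - X * d)" unfolding BM2 using Xc dc by simp
  also have "det (1\<^sub>m N - X * d) = det (1\<^sub>m n - d * X)" by (rule sylvester_det[OF Xc dc])
  also have "\<dots> = (1/k) ^ n * det T" unfolding last using Tc by simp
  finally have "k ^ m * det M = k ^ (2 * m) * ((1/k) ^ n * det T)" unfolding detB N_def .
  hence h: "k ^ m * det M = k ^ m * (k ^ m * ((1/k) ^ n * det T))"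
    by (simp add: mult_2 power_add mult.assoc)
  have "k ^ m \<noteq> 0" using k0 by simp
  hence "det M = k ^ m * ((1/k) ^ n * det T)" using h by (metis mult_left_cancel)
  hence "det M = k ^ m * (1/k) ^ n * det T" by (simp add: mult.assoc)
  also have "k ^ m * (1/k) ^ n = k powi (int m - int n)"
    using k0 by (simp add: power_int_diff power_one_over divide_inverse power_inverse)
  finally have fin: "det M = k powi (int m - int n) * det T" .
  show ?thesis using fin unfolding M_def N_def T_def DS_def dH_def k_def .
qed

end
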